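(* Let $R$ be a ring. The following are equivalent: (i) $R$ is strongly nil-clean; (ii) ${\rm T}_n(R)$ is strongly weakly nil-clean for all $n \in \mathbb{N}$; (iii) ${\rm T}_n(R)$ is strongly weakly nil-clean for some $n \geq 3$; (iv) ${\rm T}_n(R)$ is GSWNC for some $n \geq 3$.
   Context: All rings are associative with identity. ${\rm T}_n(R)$ denotes the ring of $n\times n$ upper triangular matrices over $R$. An element $a$ of a ring is strongly nil-clean if $a = e + q$ with $e$ idempotent, $q$ nilpotent and $eq = qe$; it is strongly weakly nil-clean if there exist an idempotent $e$ and a nilpotent $q$ with $eq = qe$ such that $a = q + e$ or $a = q - e$. A ring is strongly nil-clean (resp. strongly weakly nil-clean) if all its elements are. A ring is GSWNC if every non-invertible element is strongly weakly nil-clean. *)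

theory Defs
  imports "HOL-Algebra.Ring"
begin

definition idem :: "('a, 'm) ring_scheme \<Rightarrow> 'a \<Rightarrow> bool" where
  "idem R e \<longleftrightarrow> e \<in> carrier R \<and> e \<otimes>\<^bsub>R\<^esub> e = e"

definition nilp :: "('a, 'm) ring_scheme \<Rightarrow> 'a \<Rightarrow> bool" where
  "nilp R q \<longleftrightarrow> q \<in> carrier R \<and> (\<exists>k::nat. q [^]\<^bsub>R\<^esub> k = \<zero>\<^bsub>R\<^esub>)"

definition strongly_nil_clean_elem :: "('a, 'm) ring_scheme \<Rightarrow> 'a \<Rightarrow> bool" where
  "strongly_nil_clean_elem R a \<longleftrightarrow>
     (\<exists>e q. idem R e \<and> nilp R q \<and> e \<otimes>\<^bsub>R\<^esub> q = q \<otimes>\<^bsub>R\<^esub> e \<and> a = e \<oplus>\<^bsub>R\<^esub> q)"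

definition strongly_weakly_nil_clean_elem :: "('a, 'm) ring_scheme \<Rightarrow> 'a \<Rightarrow> bool" where
  "strongly_weakly_nil_clean_elem R a \<longleftrightarrow>
     (\<exists>e q. idem R e \<and> nilp R q \<and> e \<otimes>\<^bsub>R\<^esub> q = q \<otimes>\<^bsub>R\<^esub> e \<and>
        (a = q \<oplus>\<^bsub>R\<^esub> e \<or> a = q \<ominus>\<^bsub>R\<^esub> e))"

definition strongly_nil_clean :: "('a, 'm) ring_scheme \<Rightarrow> bool" where
  "strongly_nil_clean R \<longleftrightarrow> (\<forall>a \<in> carrier R. strongly_nil_clean_elem R a)"

definition strongly_weakly_nil_clean :: "('a, 'm) ring_scheme \<Rightarrow> bool" where
  "strongly_weakly_nil_clean R \<longleftrightarrow> (\<forall>a \<in> carrier R. strongly_weakly_nil_clean_elem R a)"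

definition GSWNC :: "('a, 'm) ring_scheme \<Rightarrow> bool" where
  "GSWNC R \<longleftrightarrow> (\<forall>a \<in> carrier R - Units R. strongly_weakly_nil_clean_elem R a)"

text \<open>The ring T_n(R) of n x n upper triangular matrices over R, with rows/columns
  indexed by 0..n-1; matrices are functions vanishing outside the upper triangle.\<close>

definition upper_tri :: "nat \<Rightarrow> ('a, 'm) ring_scheme \<Rightarrow> (nat \<Rightarrow> nat \<Rightarrow> 'a) ring" where
  "upper_tri n R =
     \<lparr> carrier = {A. (\<forall>i j. A i j \<in> carrier R) \<and>
                     (\<forall>i j. \<not> (i \<le> j \<and> j < n) \<longrightarrow> A i j = \<zero>\<^bsub>R\<^esub>)},
       mult = (\<lambda>A B i j. if i < n \<and> j < n
                          then finsum R (\<lambda>k. A i k \<otimes>\<^bsub>R\<^esub> B k j) {..<n}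
                          else \<zero>\<^bsub>R\<^esub>),
       one = (\<lambda>i j. if i = j \<and> i < n then \<one>\<^bsub>R\<^esub> else \<zero>\<^bsub>R\<^esub>),
       zero = (\<lambda>i j. \<zero>\<^bsub>R\<^esub>),
       add = (\<lambda>A B i j. A i j \<oplus>\<^bsub>R\<^esub> B i j) \<rparr>"

end

theory Submission
  imports Defs "HOL-Algebra.Subrings"
begin


context abelian_monoid begin
lemma finsum_swap:
  assumes "finite A" "finite B" "\<And>i j. i \<in> A \<Longrightarrow> j \<in> B \<Longrightarrow> f i j \<in> carrier G"
  shows "(\<Oplus>i\<in>A. \<Oplus>j\<in>B. f i j) = (\<Oplus>j\<in>B. \<Oplus>i\<in>A. f i j)"
  using assms
proof (induction A rule: finite_induct)
  case empty
  then show ?case by (simp add: finsum_zero)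
next
  case (insert a A)
  have "(\<Oplus>i\<in>insert a A. \<Oplus>j\<in>B. f i j) = (\<Oplus>j\<in>B. f a j) \<oplus> (\<Oplus>i\<in>A. \<Oplus>j\<in>B. f i j)"
    using insert by (intro finsum_insert) (auto intro: finsum_closed)
  also have "\<dots> = (\<Oplus>j\<in>B. f a j) \<oplus> (\<Oplus>j\<in>B. \<Oplus>i\<in>A. f i j)"
    using insert by simp
  also have "\<dots> = (\<Oplus>j\<in>B. f a j \<oplus> (\<Oplus>i\<in>A. f i j))"
    using insert by (intro finsum_addf[symmetric]) (auto intro: finsum_closed)
  also have "\<dots> = (\<Oplus>j\<in>B. \<Oplus>i\<in>insert a A. f i j)"
    using insert by (intro finsum_cong) (auto simp: finsum_insert intro: finsum_closed)
  finally show ?case .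
qed

lemma finsum_single:
  assumes "i \<in> A" "finite A" "f \<in> A \<rightarrow> carrier G" "\<And>k. k \<in> A \<Longrightarrow> k \<noteq> i \<Longrightarrow> f k = \<zero>"
  shows "finsum G f A = f i"
proof -
  have "finsum G f A = (\<Oplus>j\<in>A. if i = j then f j else \<zero>)"
    using assms by (intro finsum_cong) (auto simp: simp_implies_def)
  also have "\<dots> = f i" using add.finprod_singleton[OF assms(1-3)] by simp
  finally show ?thesis .
qed
end

context ring begin

abbreviation "UT n \<equiv> upper_tri n R"

lemma ut_carrier: "A \<in> carrier (UT n) \<longleftrightarrow> (\<forall>i j. A i j \<in> carrier R) \<and> (\<forall>i j. \<not> (i \<le> j \<and> j < n) \<longrightarrow> A i j = \<zero>)"
  by (simp add: upper_tri_def)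
lemma ut_mult: "(A \<otimes>\<^bsub>UT n\<^esub> B) i j = (if i < n \<and> j < n then (\<Oplus>k\<in>{..<n}. A i k \<otimes> B k j) else \<zero>)"
  by (simp add: upper_tri_def)
lemma ut_one: "\<one>\<^bsub>UT n\<^esub> i j = (if i = j \<and> i < n then \<one> else \<zero>)"
  by (simp add: upper_tri_def)
lemma ut_zero: "\<zero>\<^bsub>UT n\<^esub> i j = \<zero>"
  by (simp add: upper_tri_def)
lemma ut_add: "(A \<oplus>\<^bsub>UT n\<^esub> B) i j = A i j \<oplus> B i j"
  by (simp add: upper_tri_def)

lemma ut_in: "A \<in> carrier (UT n) \<Longrightarrow> A i j \<in> carrier R"
  by (simp add: ut_carrier)
lemma ut_out: "A \<in> carrier (UT n) \<Longrightarrow> \<not> (i \<le> j \<and> j < n) \<Longrightarrow> A i j = \<zero>"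
  by (simp add: ut_carrier)

lemma ut_mult_closed:
  assumes A: "A \<in> carrier (UT n)" and B: "B \<in> carrier (UT n)"
  shows "A \<otimes>\<^bsub>UT n\<^esub> B \<in> carrier (UT n)"
proof -
  have "(A \<otimes>\<^bsub>UT n\<^esub> B) i j \<in> carrier R" for i j
    using ut_in[OF A] ut_in[OF B] by (auto simp: ut_mult intro!: finsum_closed)
  moreover have "(A \<otimes>\<^bsub>UT n\<^esub> B) i j = \<zero>" if "\<not> (i \<le> j \<and> j < n)" for i j
  proof (cases "i < n \<and> j < n")
    case True
    then have "j < i" using that by auto
    have z: "A i k \<otimes> B k j = \<zero>" for k
    proof (cases "k < i")
      case True then show ?thesis using A B by (simp add: ut_out ut_in)
    next
      case False then show ?thesis using A B \<open>j < i\<close> by (simp add: ut_out ut_in)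
    qed
    have "(\<Oplus>k\<in>{..<n}. A i k \<otimes> B k j) = (\<Oplus>k\<in>{..<n}. \<zero>)"
      by (simp add: z)
    then show ?thesis using True by (simp add: ut_mult finsum_zero)
  next
    case False then show ?thesis by (auto simp: ut_mult)
  qed
  ultimately show ?thesis by (simp add: ut_carrier)
qed

lemma ut_diag_mult:
  assumes A: "A \<in> carrier (UT n)" and B: "B \<in> carrier (UT n)" and i: "i < n"
  shows "(A \<otimes>\<^bsub>UT n\<^esub> B) i i = A i i \<otimes> B i i"
proof -
  have "(\<Oplus>k\<in>{..<n}. A i k \<otimes> B k i) = A i i \<otimes> B i i"
  proof (rule finsum_single[where f = "\<lambda>k. A i k \<otimes> B k i"])
    fix k assume "k \<in> {..<n}" "k \<noteq> i"
    then show "A i k \<otimes> B k i = \<zero>"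
      using A B by (cases "k < i") (auto simp: ut_out ut_in)
  qed (use i A B in \<open>auto intro: ut_in\<close>)
  then show ?thesis using i by (simp add: ut_mult)
qed


lemma ut_eqI:
  assumes "A \<in> carrier (UT n)" "B \<in> carrier (UT n)" "\<And>i j. i < n \<Longrightarrow> j < n \<Longrightarrow> A i j = B i j"
  shows "A = B"
proof (intro ext)
  fix i j show "A i j = B i j"
  proof (cases "i < n \<and> j < n")
    case True then show ?thesis using assms by auto
  next
    case False then have "\<not> (i \<le> j \<and> j < n)" by auto
    then show ?thesis using assms by (simp add: ut_out)
  qed
qed

lemma ut_add_closed: "A \<in> carrier (UT n) \<Longrightarrow> B \<in> carrier (UT n) \<Longrightarrow> A \<oplus>\<^bsub>UT n\<^esub> B \<in> carrier (UT n)"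
  by (simp add: ut_carrier ut_add)

lemma ut_one_closed: "\<one>\<^bsub>UT n\<^esub> \<in> carrier (UT n)"
  by (simp add: ut_carrier ut_one)

lemma ut_zero_closed: "\<zero>\<^bsub>UT n\<^esub> \<in> carrier (UT n)"
  by (simp add: ut_carrier ut_zero)

lemma ut_abelian_group: "abelian_group (UT n)"
proof (rule abelian_groupI)
  fix x assume x: "x \<in> carrier (UT n)"
  show "\<exists>y \<in> carrier (UT n). y \<oplus>\<^bsub>UT n\<^esub> x = \<zero>\<^bsub>UT n\<^esub>"
  proof (intro bexI)
    show "(\<lambda>i j. \<ominus> x i j) \<in> carrier (UT n)" using x by (simp add: ut_carrier)
    show "(\<lambda>i j. \<ominus> x i j) \<oplus>\<^bsub>UT n\<^esub> x = \<zero>\<^bsub>UT n\<^esub>"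
      using ut_in[OF x] by (intro ext) (simp add: ut_add ut_zero l_neg)
  qed
qed (auto simp: ut_add_closed ut_zero_closed ut_add ut_zero ut_in a_assoc a_comm a_lcomm fun_eq_iff)

lemma ut_mult_in: "i < n \<Longrightarrow> j < n \<Longrightarrow> (A \<otimes>\<^bsub>UT n\<^esub> B) i j = (\<Oplus>k\<in>{..<n}. A i k \<otimes> B k j)"
  by (simp add: ut_mult)

lemma ut_monoid: "monoid (UT n)"
proof (rule monoidI)
  fix A B C assume A: "A \<in> carrier (UT n)" and B: "B \<in> carrier (UT n)" and C: "C \<in> carrier (UT n)"
  note [simp] = ut_in[OF A] ut_in[OF B] ut_in[OF C]
  show "(A \<otimes>\<^bsub>UT n\<^esub> B) \<otimes>\<^bsub>UT n\<^esub> C = A \<otimes>\<^bsub>UT n\<^esub> (B \<otimes>\<^bsub>UT n\<^esub> C)"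
  proof (rule ut_eqI)
    fix i j assume i: "i < n" and j: "j < n"
    have "((A \<otimes>\<^bsub>UT n\<^esub> B) \<otimes>\<^bsub>UT n\<^esub> C) i j = (\<Oplus>k\<in>{..<n}. (\<Oplus>l\<in>{..<n}. A i l \<otimes> B l k) \<otimes> C k j)"
      using i j by (auto simp: ut_mult_in intro!: finsum_cong)
    also have "\<dots> = (\<Oplus>k\<in>{..<n}. \<Oplus>l\<in>{..<n}. A i l \<otimes> B l k \<otimes> C k j)"
      by (intro finsum_cong) (auto simp: finsum_ldistr simp_implies_def)
    also have "\<dots> = (\<Oplus>l\<in>{..<n}. \<Oplus>k\<in>{..<n}. A i l \<otimes> B l k \<otimes> C k j)"
      by (rule finsum_swap) auto
    also have "\<dots> = (\<Oplus>l\<in>{..<n}. A i l \<otimes> (\<Oplus>k\<in>{..<n}. B l k \<otimes> C k j))"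
      by (intro finsum_cong) (auto simp: finsum_rdistr m_assoc simp_implies_def)
    also have "\<dots> = (A \<otimes>\<^bsub>UT n\<^esub> (B \<otimes>\<^bsub>UT n\<^esub> C)) i j"
      using i j by (auto simp: ut_mult_in intro!: finsum_cong)
    finally show "((A \<otimes>\<^bsub>UT n\<^esub> B) \<otimes>\<^bsub>UT n\<^esub> C) i j = (A \<otimes>\<^bsub>UT n\<^esub> (B \<otimes>\<^bsub>UT n\<^esub> C)) i j" .
  qed (use A B C in \<open>auto intro: ut_mult_closed\<close>)
next
  fix A assume A: "A \<in> carrier (UT n)"
  note [simp] = ut_in[OF A]
  show "\<one>\<^bsub>UT n\<^esub> \<otimes>\<^bsub>UT n\<^esub> A = A"
  proof (rule ut_eqI)
    fix i j assume i: "i < n" and j: "j < n"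
    have "(\<Oplus>k\<in>{..<n}. \<one>\<^bsub>UT n\<^esub> i k \<otimes> A k j) = \<one>\<^bsub>UT n\<^esub> i i \<otimes> A i j"
      by (rule finsum_single[where f = "\<lambda>k. \<one>\<^bsub>UT n\<^esub> i k \<otimes> A k j"]) (use i in \<open>auto simp: ut_one\<close>)
    then show "(\<one>\<^bsub>UT n\<^esub> \<otimes>\<^bsub>UT n\<^esub> A) i j = A i j" using i j by (simp add: ut_mult_in ut_one)
  qed (use A in \<open>auto intro: ut_mult_closed ut_one_closed\<close>)
  show "A \<otimes>\<^bsub>UT n\<^esub> \<one>\<^bsub>UT n\<^esub> = A"
  proof (rule ut_eqI)
    fix i j assume i: "i < n" and j: "j < n"
    have "(\<Oplus>k\<in>{..<n}. A i k \<otimes> \<one>\<^bsub>UT n\<^esub> k j) = A i j \<otimes> \<one>\<^bsub>UT n\<^esub> j j"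
      by (rule finsum_single[where f = "\<lambda>k. A i k \<otimes> \<one>\<^bsub>UT n\<^esub> k j"]) (use j in \<open>auto simp: ut_one\<close>)
    then show "(A \<otimes>\<^bsub>UT n\<^esub> \<one>\<^bsub>UT n\<^esub>) i j = A i j" using i j by (simp add: ut_mult_in ut_one)
  qed (use A in \<open>auto intro: ut_mult_closed ut_one_closed\<close>)
qed (auto intro: ut_mult_closed ut_one_closed)

lemma ut_ring: "ring (UT n)"
proof (rule ringI)
  show "abelian_group (UT n)" by (rule ut_abelian_group)
  show "monoid (UT n)" by (rule ut_monoid)
next
  fix A B C assume A: "A \<in> carrier (UT n)" and B: "B \<in> carrier (UT n)" and C: "C \<in> carrier (UT n)"
  note [simp] = ut_in[OF A] ut_in[OF B] ut_in[OF C]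
  show "(A \<oplus>\<^bsub>UT n\<^esub> B) \<otimes>\<^bsub>UT n\<^esub> C = A \<otimes>\<^bsub>UT n\<^esub> C \<oplus>\<^bsub>UT n\<^esub> B \<otimes>\<^bsub>UT n\<^esub> C"
  proof (rule ut_eqI)
    fix i j assume i: "i < n" and j: "j < n"
    show "((A \<oplus>\<^bsub>UT n\<^esub> B) \<otimes>\<^bsub>UT n\<^esub> C) i j = (A \<otimes>\<^bsub>UT n\<^esub> C \<oplus>\<^bsub>UT n\<^esub> B \<otimes>\<^bsub>UT n\<^esub> C) i j"
      using i j by (simp add: ut_mult_in ut_add l_distr finsum_addf)
  qed (use A B C in \<open>auto intro: ut_mult_closed ut_add_closed\<close>)
  show "C \<otimes>\<^bsub>UT n\<^esub> (A \<oplus>\<^bsub>UT n\<^esub> B) = C \<otimes>\<^bsub>UT n\<^esub> A \<oplus>\<^bsub>UT n\<^esub> C \<otimes>\<^bsub>UT n\<^esub> B"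
  proof (rule ut_eqI)
    fix i j assume i: "i < n" and j: "j < n"
    show "(C \<otimes>\<^bsub>UT n\<^esub> (A \<oplus>\<^bsub>UT n\<^esub> B)) i j = (C \<otimes>\<^bsub>UT n\<^esub> A \<oplus>\<^bsub>UT n\<^esub> C \<otimes>\<^bsub>UT n\<^esub> B) i j"
      using i j by (simp add: ut_mult_in ut_add r_distr finsum_addf)
  qed (use A B C in \<open>auto intro: ut_mult_closed ut_add_closed\<close>)
qed

end


definition bicomm :: "('a, 'b) ring_scheme \<Rightarrow> 'a set \<Rightarrow> 'a set" where
  "bicomm R X = {y \<in> carrier R. \<forall>z\<in>carrier R. (\<forall>x\<in>X. z \<otimes>\<^bsub>R\<^esub> x = x \<otimes>\<^bsub>R\<^esub> z) \<longrightarrow> z \<otimes>\<^bsub>R\<^esub> y = y \<otimes>\<^bsub>R\<^esub> z}"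

context ring begin

lemma pow_zero_mono:
  assumes "x \<in> carrier R" "x [^] (p::nat) = \<zero>" "p \<le> q"
  shows "x [^] q = \<zero>"
proof -
  have "x [^] q = x [^] p \<otimes> x [^] (q - p)"
    using assms(1,3) nat_pow_mult[of x p "q - p"] by simp
  then show ?thesis using assms by simp
qed

lemma bicomm_carrier: "bicomm R X \<subseteq> carrier R"
  by (auto simp: bicomm_def)

lemma bicomm_sup: "X \<subseteq> carrier R \<Longrightarrow> X \<subseteq> bicomm R X"
  by (auto simp: bicomm_def)

lemma bicomm_subcring:
  assumes X: "X \<subseteq> carrier R" and comm: "\<And>x y. x \<in> X \<Longrightarrow> y \<in> X \<Longrightarrow> x \<otimes> y = y \<otimes> x"
  shows "subcring (bicomm R X) R"
proof (rule subcringI)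
  show "subring (bicomm R X) R"
  proof (rule subringI)
    show "bicomm R X \<subseteq> carrier R" by (rule bicomm_carrier)
    show "\<one> \<in> bicomm R X" by (auto simp: bicomm_def)
  next
    fix h assume h: "h \<in> bicomm R X"
    then have hc: "h \<in> carrier R" by (auto simp: bicomm_def)
    show "\<ominus> h \<in> bicomm R X"
      using h hc by (auto simp: bicomm_def r_minus l_minus)
  next
    fix h1 h2 assume h: "h1 \<in> bicomm R X" "h2 \<in> bicomm R X"
    then have hc: "h1 \<in> carrier R" "h2 \<in> carrier R" by (auto simp: bicomm_def)
    show "h1 \<otimes> h2 \<in> bicomm R X"
      unfolding bicomm_def
    proof (intro CollectI conjI ballI impI)
      show "h1 \<otimes> h2 \<in> carrier R" using hc by simp
      fix z assume z: "z \<in> carrier R" "\<forall>x\<in>X. z \<otimes> x = x \<otimes> z"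
      then have "z \<otimes> h1 = h1 \<otimes> z" "z \<otimes> h2 = h2 \<otimes> z" using h by (auto simp: bicomm_def)
      then show "z \<otimes> (h1 \<otimes> h2) = h1 \<otimes> h2 \<otimes> z"
        using hc z by (metis m_assoc)
    qed
    show "h1 \<oplus> h2 \<in> bicomm R X"
      using h hc by (auto simp: bicomm_def l_distr r_distr)
  qed
next
  fix h1 h2 assume h: "h1 \<in> bicomm R X" "h2 \<in> bicomm R X"
  have "\<forall>x\<in>X. h2 \<otimes> x = x \<otimes> h2"
  proof
    fix x assume x: "x \<in> X"
    then have "\<forall>y\<in>X. x \<otimes> y = y \<otimes> x" using comm by auto
    then show "h2 \<otimes> x = x \<otimes> h2" using h(2) x X by (auto simp: bicomm_def)
  qed
  then show "h1 \<otimes> h2 = h2 \<otimes> h1" using h by (auto simp: bicomm_def)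
qed

lemma bicomm_cring:
  assumes "X \<subseteq> carrier R" "\<And>x y. x \<in> X \<Longrightarrow> y \<in> X \<Longrightarrow> x \<otimes> y = y \<otimes> x"
  shows "cring (R\<lparr>carrier := bicomm R X\<rparr>)"
  using subcring_iff[OF bicomm_carrier] bicomm_subcring[OF assms] by simp

lemma sub_pow: "x [^]\<^bsub>R\<lparr>carrier := C\<rparr>\<^esub> (k::nat) = x [^] k"
  by (simp add: nat_pow_def)

lemma sub_a_inv:
  assumes "cring (R\<lparr>carrier := C\<rparr>)" "C \<subseteq> carrier R" "y \<in> C"
  shows "\<ominus>\<^bsub>R\<lparr>carrier := C\<rparr>\<^esub> y = \<ominus> y"
proof -
  interpret S: cring "R\<lparr>carrier := C\<rparr>" by fact
  have 1: "\<ominus>\<^bsub>R\<lparr>carrier := C\<rparr>\<^esub> y \<in> C" using S.a_inv_closed assms by simp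
  have "\<ominus>\<^bsub>R\<lparr>carrier := C\<rparr>\<^esub> y \<oplus> y = \<zero>" using S.l_neg assms by simp
  then show ?thesis using 1 assms by (intro minus_equality[symmetric]) auto
qed

lemma sub_a_minus:
  assumes "cring (R\<lparr>carrier := C\<rparr>)" "C \<subseteq> carrier R" "y \<in> C"
  shows "x \<ominus>\<^bsub>R\<lparr>carrier := C\<rparr>\<^esub> y = x \<ominus> y"
  using sub_a_inv[OF assms] by (simp add: a_minus_def)

end

context cring begin

lemma add_pow_form:
  assumes u: "u \<in> carrier R" and v: "v \<in> carrier R"
  shows "\<exists>w\<in>carrier R. (u \<oplus> v) [^] (k::nat) = v [^] k \<oplus> u \<otimes> w"
proof (induction k)
  case 0
  show ?case using u by (intro bexI[of _ \<zero>]) auto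
next
  case (Suc k)
  then obtain w where w: "w \<in> carrier R" and eq: "(u \<oplus> v) [^] k = v [^] k \<oplus> u \<otimes> w" by auto
  define V where "V = v [^] k"
  have V: "V \<in> carrier R" using v by (simp add: V_def)
  have "(u \<oplus> v) [^] Suc k = (V \<oplus> u \<otimes> w) \<otimes> (u \<oplus> v)" using eq by (simp add: V_def)
  also have "\<dots> = V \<otimes> v \<oplus> u \<otimes> (V \<oplus> w \<otimes> u \<oplus> w \<otimes> v)"
    using u v w V by algebra
  finally show ?case using u v w V by (intro bexI[of _ "V \<oplus> w \<otimes> u \<oplus> w \<otimes> v"]) (auto simp: V_def)
qed

lemma nilp_add_c:
  assumes u: "u \<in> carrier R" and v: "v \<in> carrier R" and up: "u [^] (p::nat) = \<zero>" and vq: "v [^] (q::nat) = \<zero>"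
  shows "(u \<oplus> v) [^] (q * p) = \<zero>"
proof -
  obtain w where w: "w \<in> carrier R" and eq: "(u \<oplus> v) [^] q = v [^] q \<oplus> u \<otimes> w"
    using add_pow_form[OF u v] by blast
  have "(u \<oplus> v) [^] (q * p) = ((u \<oplus> v) [^] q) [^] p" using u v by (simp add: nat_pow_pow)
  also have "\<dots> = (u \<otimes> w) [^] p" using eq vq u w by simp
  also have "\<dots> = \<zero>" using u w up by (simp add: nat_pow_distrib)
  finally show ?thesis .
qed

lemma nilp_mult_c:
  assumes u: "u \<in> carrier R" and w: "w \<in> carrier R" and up: "u [^] (p::nat) = \<zero>"
  shows "(u \<otimes> w) [^] p = \<zero>"
  using assms by (simp add: nat_pow_distrib)

lemma fix_zero:
  assumes q: "q \<in> carrier R" and y: "y \<in> carrier R" and fx: "q \<otimes> y = y" and qk: "q [^] (k::nat) = \<zero>"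
  shows "y = \<zero>"
proof -
  have "q [^] (j::nat) \<otimes> y = y" for j
  proof (induction j)
    case 0 then show ?case using y by simp
  next
    case (Suc j)
    have "q [^] Suc j \<otimes> y = q [^] j \<otimes> (q \<otimes> y)" using q y by (simp add: m_assoc)
    then show ?case using fx Suc by simp
  qed
  from this[of k] show ?thesis using qk y by simp
qed

lemma newton:
  assumes a: "a \<in> carrier R" and xm: "(a \<ominus> a \<otimes> a) [^] (m::nat) = \<zero>"
  shows "\<exists>e\<in>carrier R. e \<otimes> e = e \<and> (\<exists>k::nat. (a \<ominus> e) [^] k = \<zero>)"
proof -
  define x where "x = a \<ominus> a \<otimes> a"
  have x: "x \<in> carrier R" using a by (simp add: x_def)
  define two where "two = \<one> \<oplus> \<one>"
  define three where "three = \<one> \<oplus> \<one> \<oplus> \<one>"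
  define four where "four = two \<otimes> two"
  have two: "two \<in> carrier R" and three: "three \<in> carrier R" and four: "four \<in> carrier R"
    by (auto simp: two_def three_def four_def)
  define f where "f = (\<lambda>e. e \<oplus> (e \<ominus> e \<otimes> e) \<otimes> (two \<otimes> e \<ominus> \<one>))"
  have fc: "e \<in> carrier R \<Longrightarrow> f e \<in> carrier R" for e using two by (simp add: f_def)
  have key: "(f ^^ k) a \<in> carrier R \<and> (\<exists>c\<in>carrier R. \<exists>d\<in>carrier R.
      (f ^^ k) a \<ominus> (f ^^ k) a \<otimes> (f ^^ k) a = x [^] (2 ^ k :: nat) \<otimes> c \<and> (f ^^ k) a = a \<oplus> x \<otimes> d)" for k
  proof (induction k)
    case 0
    have "(f ^^ 0) a \<ominus> (f ^^ 0) a \<otimes> (f ^^ 0) a = x [^] (2 ^ 0 :: nat) \<otimes> \<one>"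
      using x by (simp add: x_def)
    moreover have "(f ^^ 0) a = a \<oplus> x \<otimes> \<zero>" using a x by simp
    moreover have "(f ^^ 0) a \<in> carrier R" using a by simp
    ultimately show ?case using one_closed zero_closed by blast
  next
    case (Suc k)
    define e where "e = (f ^^ k) a"
    from Suc obtain c d where e: "e \<in> carrier R" and c: "c \<in> carrier R" and d: "d \<in> carrier R"
      and ec: "e \<ominus> e \<otimes> e = x [^] (2 ^ k :: nat) \<otimes> c" and ed: "e = a \<oplus> x \<otimes> d"
      unfolding e_def by blast
    define X where "X = x [^] (2 ^ k :: nat)"
    define Y where "Y = x [^] (2 ^ k - 1 :: nat)"
    have X: "X \<in> carrier R" and Y: "Y \<in> carrier R" using x by (auto simp: X_def Y_def)
    have XY: "X = x \<otimes> Y"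
    proof -
      have "(2::nat) ^ k = Suc (2 ^ k - 1)" by simp
      then show ?thesis unfolding X_def Y_def by (metis nat_pow_Suc2 x)
    qed
    have XX: "X \<otimes> X = x [^] (2 ^ Suc k :: nat)"
      using x by (simp add: X_def nat_pow_mult mult_2)
    define t where "t = e \<ominus> e \<otimes> e"
    define s where "s = two \<otimes> e \<ominus> \<one>"
    have t: "t \<in> carrier R" and s: "s \<in> carrier R" using e two by (auto simp: t_def s_def)
    have fe: "f e = e \<oplus> t \<otimes> s" by (simp add: f_def t_def s_def)
    have p1: "f e \<ominus> f e \<otimes> f e = (e \<ominus> e \<otimes> e) \<oplus> t \<otimes> s \<otimes> (\<one> \<ominus> e \<ominus> e) \<ominus> t \<otimes> t \<otimes> (s \<otimes> s)"
      unfolding fe using e t s by algebra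
    have p2: "\<one> \<ominus> e \<ominus> e = \<ominus> s" unfolding s_def two_def using e by algebra
    have p3: "s \<otimes> s = \<one> \<ominus> four \<otimes> t" unfolding s_def four_def two_def t_def using e by algebra
    have "f e \<ominus> f e \<otimes> f e = t \<ominus> t \<otimes> (s \<otimes> s) \<ominus> t \<otimes> t \<otimes> (s \<otimes> s)"
      unfolding p1 p2 t_def[symmetric] using t s by algebra
    also have "\<dots> = t \<ominus> t \<otimes> (\<one> \<ominus> four \<otimes> t) \<ominus> t \<otimes> t \<otimes> (\<one> \<ominus> four \<otimes> t)"
      unfolding p3 ..
    also have "\<dots> = t \<otimes> t \<otimes> (three \<oplus> four \<otimes> t)"
      unfolding four_def three_def two_def using t by algebra
    finally have p4: "f e \<ominus> f e \<otimes> f e = t \<otimes> t \<otimes> (three \<oplus> four \<otimes> t)" .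
    define T where "T = three \<oplus> four \<otimes> t"
    have T: "T \<in> carrier R" using three four t by (simp add: T_def)
    have tX: "t = X \<otimes> c" using ec by (simp add: t_def X_def)
    have "f e \<ominus> f e \<otimes> f e = t \<otimes> t \<otimes> T" using p4 by (simp add: T_def)
    also have "t \<otimes> t \<otimes> T = (X \<otimes> X) \<otimes> (c \<otimes> c \<otimes> T)"
      unfolding tX using X c T by algebra
    finally have s1: "f e \<ominus> f e \<otimes> f e = (X \<otimes> X) \<otimes> (c \<otimes> c \<otimes> T)" .
    have s2: "f e = a \<oplus> x \<otimes> (d \<oplus> Y \<otimes> c \<otimes> s)"
    proof -
      have "f e = (a \<oplus> x \<otimes> d) \<oplus> ((x \<otimes> Y) \<otimes> c) \<otimes> s"
        unfolding fe tX XY[symmetric] using ed by simp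
      also have "\<dots> = a \<oplus> x \<otimes> (d \<oplus> Y \<otimes> c \<otimes> s)"
        using a x d Y c s by algebra
      finally show ?thesis .
    qed
    have "(f ^^ Suc k) a = f e" by (simp add: e_def)
    moreover have "c \<otimes> c \<otimes> T \<in> carrier R" "d \<oplus> Y \<otimes> c \<otimes> s \<in> carrier R" using c T d Y s by auto
    ultimately show ?case using fc[OF e] s1 s2 XX by metis
  qed
  define e where "e = (f ^^ m) a"
  obtain c d where e: "e \<in> carrier R" and c: "c \<in> carrier R" and d: "d \<in> carrier R"
      and ec: "e \<ominus> e \<otimes> e = x [^] (2 ^ m :: nat) \<otimes> c" and ed: "e = a \<oplus> x \<otimes> d"
    using key[of m] unfolding e_def by blast
  have "x [^] (2 ^ m :: nat) = \<zero>"
    using pow_zero_mono[OF x xm[folded x_def]] by simp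
  then have "e \<ominus> e \<otimes> e = \<zero>" using ec c by simp
  then have ee: "e \<otimes> e = e"
    using e by (metis a_minus_def add.inv_closed add.inv_equality a_comm m_closed minus_minus r_neg2 r_zero)
  have "a \<ominus> e = x \<otimes> (\<ominus> d)" unfolding ed using a x d by algebra
  then have "(a \<ominus> e) [^] m = \<zero>"
    using nilp_mult_c[OF x _ xm[folded x_def], of "\<ominus> d"] d by simp
  then show ?thesis using e ee by blast
qed

lemma cid1: "e \<in> carrier R \<Longrightarrow> q \<in> carrier R \<Longrightarrow>
  (e \<oplus> q) \<ominus> (e \<oplus> q) \<otimes> (e \<oplus> q) = (e \<ominus> e \<otimes> e) \<oplus> q \<otimes> (\<one> \<ominus> e \<ominus> e \<ominus> q)"
  by algebra
lemma cid2: "q \<in> carrier R \<Longrightarrow> q \<otimes> (q \<ominus> (\<one> \<oplus> \<one>)) = (q \<ominus> \<one>) \<otimes> (q \<ominus> \<one>) \<ominus> \<one>"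
  by algebra
lemma cid3: "q \<in> carrier R \<Longrightarrow> (q \<ominus> \<one>) \<ominus> \<one> = q \<ominus> (\<one> \<oplus> \<one>)"
  by algebra
lemma cid4: "e \<in> carrier R \<Longrightarrow> q \<in> carrier R \<Longrightarrow> q \<ominus> e = e \<oplus> (q \<oplus> (\<one> \<oplus> \<one>) \<otimes> (\<ominus> e))"
  by algebra

end

context ring begin

lemma fix_zero_r:
  assumes q: "q \<in> carrier R" and y: "y \<in> carrier R" and fx: "q \<otimes> y = y" and qk: "q [^] (k::nat) = \<zero>"
  shows "y = \<zero>"
proof -
  have "q [^] (j::nat) \<otimes> y = y" for j
  proof (induction j)
    case 0 then show ?case using y by simp
  next
    case (Suc j)
    have "q [^] Suc j \<otimes> y = q [^] j \<otimes> (q \<otimes> y)" using q y by (simp add: m_assoc)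
    then show ?case using fx Suc by simp
  qed
  from this[of k] show ?thesis using qk y by simp
qed

lemma diesl:
  assumes a: "a \<in> carrier R" and xm: "(a \<ominus> a \<otimes> a) [^] (m::nat) = \<zero>"
  shows "strongly_nil_clean_elem R a"
proof -
  define C where "C = bicomm R {a}"
  have CR: "C \<subseteq> carrier R" by (simp add: C_def bicomm_carrier)
  have cS: "cring (R\<lparr>carrier := C\<rparr>)" unfolding C_def using a by (intro bicomm_cring) auto
  interpret S: cring "R\<lparr>carrier := C\<rparr>" by (rule cS)
  have aC: "a \<in> C" using bicomm_sup[of "{a}"] a by (auto simp: C_def)
  have aaC: "a \<otimes> a \<in> C" using S.m_closed[of a a] aC by simp
  have "(a \<ominus>\<^bsub>R\<lparr>carrier := C\<rparr>\<^esub> a \<otimes>\<^bsub>R\<lparr>carrier := C\<rparr>\<^esub> a) [^]\<^bsub>R\<lparr>carrier := C\<rparr>\<^esub> m = \<zero>\<^bsub>R\<lparr>carrier := C\<rparr>\<^esub>"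
    using xm sub_a_minus[OF cS CR aaC] by (simp add: sub_pow)
  then obtain e k where eC: "e \<in> C" and ee: "e \<otimes> e = e"
    and ek: "(a \<ominus>\<^bsub>R\<lparr>carrier := C\<rparr>\<^esub> e) [^]\<^bsub>R\<lparr>carrier := C\<rparr>\<^esub> (k::nat) = \<zero>\<^bsub>R\<lparr>carrier := C\<rparr>\<^esub>"
    using S.newton[of a m] aC by auto
  define q where "q = a \<ominus> e"
  have qS: "q = a \<ominus>\<^bsub>R\<lparr>carrier := C\<rparr>\<^esub> e" using sub_a_minus[OF cS CR eC] by (simp add: q_def)
  have qC: "q \<in> C" unfolding qS using S.minus_closed[of a e] aC eC by simp
  have e: "e \<in> carrier R" and q: "q \<in> carrier R" using eC qC CR by auto
  have "idem R e" using e ee by (simp add: idem_def)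
  moreover have "nilp R q" using q ek by (auto simp: nilp_def sub_pow qS[symmetric])
  moreover have "e \<otimes> q = q \<otimes> e" using S.m_comm[of e q] eC qC by simp
  moreover have "a = e \<oplus> q" unfolding q_def using a e by algebra
  ultimately show ?thesis unfolding strongly_nil_clean_elem_def by blast
qed

lemma snc_imp:
  assumes "strongly_nil_clean_elem R a"
  shows "\<exists>m::nat. (a \<ominus> a \<otimes> a) [^] m = \<zero>"
proof -
  obtain e q where ee: "idem R e" and qn: "nilp R q" and eq: "e \<otimes> q = q \<otimes> e" and a: "a = e \<oplus> q"
    using assms unfolding strongly_nil_clean_elem_def by blast
  have e: "e \<in> carrier R" and ee': "e \<otimes> e = e" using ee by (auto simp: idem_def)
  obtain k where q: "q \<in> carrier R" and qk: "q [^] (k::nat) = \<zero>" using qn by (auto simp: nilp_def)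
  define C where "C = bicomm R {e, q}"
  have CR: "C \<subseteq> carrier R" by (simp add: C_def bicomm_carrier)
  have cS: "cring (R\<lparr>carrier := C\<rparr>)" unfolding C_def using e q eq by (intro bicomm_cring) auto
  interpret S: cring "R\<lparr>carrier := C\<rparr>" by (rule cS)
  have eC: "e \<in> C" and qC: "q \<in> C" using bicomm_sup[of "{e, q}"] e q by (auto simp: C_def)
  define w where "w = \<one> \<ominus>\<^bsub>R\<lparr>carrier := C\<rparr>\<^esub> e \<ominus>\<^bsub>R\<lparr>carrier := C\<rparr>\<^esub> e \<ominus>\<^bsub>R\<lparr>carrier := C\<rparr>\<^esub> q"
  have wC: "w \<in> C" unfolding w_def using eC qC S.minus_closed S.one_closed by simp
  have aC: "a \<in> C" unfolding a using eC qC S.add.m_closed by simp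
  have aaC: "a \<otimes> a \<in> C" using S.m_closed[of a a] aC by simp
  have "(e \<oplus> q) \<ominus>\<^bsub>R\<lparr>carrier := C\<rparr>\<^esub> (e \<oplus> q) \<otimes> (e \<oplus> q)
        = (e \<ominus>\<^bsub>R\<lparr>carrier := C\<rparr>\<^esub> e \<otimes> e) \<oplus> q \<otimes> w"
    using S.cid1[of e q] eC qC by (simp add: w_def)
  also have "e \<ominus>\<^bsub>R\<lparr>carrier := C\<rparr>\<^esub> e \<otimes> e = \<zero>"
    using ee' S.r_neg[of e] eC by (simp add: a_minus_def)
  finally have "a \<ominus>\<^bsub>R\<lparr>carrier := C\<rparr>\<^esub> a \<otimes> a = q \<otimes> w" using q wC CR unfolding a by auto
  then have "a \<ominus> a \<otimes> a = q \<otimes> w" using sub_a_minus[OF cS CR aaC] by simp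
  moreover have "(q \<otimes> w) [^] k = \<zero>"
    using S.nilp_mult_c[of q w k] qC wC qk by (simp add: sub_pow)
  ultimately show ?thesis by auto
qed

lemma two_nilp:
  assumes e: "e \<in> carrier R" and ee: "e \<otimes> e = e" and q: "q \<in> carrier R" and qk: "q [^] (k::nat) = \<zero>"
    and one: "\<one> = q \<ominus> e"
  shows "(\<one> \<oplus> \<one>) [^] k = \<zero>"
proof -
  have e1: "e = q \<ominus> \<one>"
  proof -
    have "e = q \<ominus> (q \<ominus> e)" using e q by algebra
    then show ?thesis using one by simp
  qed
  define C where "C = bicomm R {q}"
  have CR: "C \<subseteq> carrier R" by (simp add: C_def bicomm_carrier)
  have cS: "cring (R\<lparr>carrier := C\<rparr>)" unfolding C_def using q by (intro bicomm_cring) auto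
  interpret S: cring "R\<lparr>carrier := C\<rparr>" by (rule cS)
  have qC: "q \<in> C" using bicomm_sup[of "{q}"] q by (auto simp: C_def)
  have oC: "\<one> \<in> C" "\<one> \<oplus> \<one> \<in> C" using S.one_closed S.add.m_closed by auto
  have "q \<otimes> (q \<ominus> (\<one> \<oplus> \<one>)) = (q \<ominus> \<one>) \<otimes> (q \<ominus> \<one>) \<ominus> \<one>"
    using S.cid2[of q] qC S.minus_closed[of q "\<one>"] by (simp add: sub_a_minus[OF cS CR] oC)
  also have "\<dots> = (q \<ominus> \<one>) \<ominus> \<one>" using ee e1 by simp
  also have "\<dots> = q \<ominus> (\<one> \<oplus> \<one>)"
    using S.cid3[of q] qC S.minus_closed[of q "\<one>"] by (simp add: sub_a_minus[OF cS CR] oC)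
  finally have "q \<ominus> (\<one> \<oplus> \<one>) = \<zero>" using fix_zero_r[OF q _ _ qk] q by auto
  then have "q = \<one> \<oplus> \<one>"
    using q by (metis a_minus_def add.inv_closed add.inv_equality a_comm one_closed add.m_closed minus_minus r_neg2 r_zero)
  then show ?thesis using qk by simp
qed

lemma minus_case:
  assumes e: "e \<in> carrier R" and ee: "e \<otimes> e = e" and q: "q \<in> carrier R" and qk: "q [^] (k::nat) = \<zero>"
    and eq: "e \<otimes> q = q \<otimes> e" and two: "(\<one> \<oplus> \<one>) [^] (j::nat) = \<zero>"
  shows "strongly_nil_clean_elem R (q \<ominus> e)"
proof -
  define C where "C = bicomm R {e, q}"
  have CR: "C \<subseteq> carrier R" by (simp add: C_def bicomm_carrier)
  have cS: "cring (R\<lparr>carrier := C\<rparr>)" unfolding C_def using e q eq by (intro bicomm_cring) auto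
  interpret S: cring "R\<lparr>carrier := C\<rparr>" by (rule cS)
  have eC: "e \<in> C" and qC: "q \<in> C" using bicomm_sup[of "{e, q}"] e q by (auto simp: C_def)
  have twoC: "\<one> \<oplus> \<one> \<in> C" using S.one_closed S.add.m_closed by simp
  define v where "v = \<ominus>\<^bsub>R\<lparr>carrier := C\<rparr>\<^esub> e"
  have vC: "v \<in> C" unfolding v_def using eC S.a_inv_closed[of e] by simp
  define w where "w = q \<oplus> (\<one> \<oplus> \<one>) \<otimes> v"
  have wC: "w \<in> C" unfolding w_def using qC vC twoC S.add.m_closed S.m_closed by simp
  have "((\<one> \<oplus> \<one>) \<otimes> v) [^] j = \<zero>"
    using S.nilp_mult_c[of "\<one> \<oplus> \<one>" v j] twoC vC two by (simp add: sub_pow)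
  then have "(q \<oplus> (\<one> \<oplus> \<one>) \<otimes> v) [^] (j * k) = \<zero>"
    using S.nilp_add_c[of q "(\<one> \<oplus> \<one>) \<otimes> v" k j] qC vC twoC qk S.m_closed by (simp add: sub_pow)
  then have wn: "nilp R w" using wC CR by (auto simp: nilp_def w_def)
  have "q \<ominus>\<^bsub>R\<lparr>carrier := C\<rparr>\<^esub> e = e \<oplus> (q \<oplus> (\<one> \<oplus> \<one>) \<otimes> (\<ominus>\<^bsub>R\<lparr>carrier := C\<rparr>\<^esub> e))"
    using S.cid4[of e q] eC qC by simp
  then have "q \<ominus> e = e \<oplus> w" using sub_a_minus[OF cS CR eC] by (simp add: w_def v_def)
  moreover have "idem R e" using e ee by (simp add: idem_def)
  moreover have "e \<otimes> w = w \<otimes> e" using S.m_comm[of e w] eC wC by simp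
  ultimately show ?thesis using wn unfolding strongly_nil_clean_elem_def by blast
qed

end


context ring begin

lemma ut_diag_pow:
  assumes A: "A \<in> carrier (UT n)" and i: "i < n"
  shows "(A [^]\<^bsub>UT n\<^esub> (k::nat)) i i = (A i i) [^] k"
proof (induction k)
  case 0 then show ?case using i by (simp add: ut_one)
next
  case (Suc k)
  have c: "A [^]\<^bsub>UT n\<^esub> k \<in> carrier (UT n)" using monoid.nat_pow_closed[OF ut_monoid A] .
  have "(A [^]\<^bsub>UT n\<^esub> Suc k) = A [^]\<^bsub>UT n\<^esub> k \<otimes>\<^bsub>UT n\<^esub> A"
    using monoid.nat_pow_Suc[OF ut_monoid] .
  then show ?case using ut_diag_mult[OF c A i] Suc by simp
qed

lemma ut_a_inv:
  assumes A: "A \<in> carrier (UT n)"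
  shows "\<ominus>\<^bsub>UT n\<^esub> A = (\<lambda>i j. \<ominus> A i j)"
proof -
  have c: "(\<lambda>i j. \<ominus> A i j) \<in> carrier (UT n)" using A by (simp add: ut_carrier)
  have "(\<lambda>i j. \<ominus> A i j) \<oplus>\<^bsub>UT n\<^esub> A = \<zero>\<^bsub>UT n\<^esub>"
    using ut_in[OF A] by (intro ext) (simp add: ut_add ut_zero l_neg)
  then show ?thesis using abelian_group.minus_equality[OF ut_abelian_group _ A c] by simp
qed

lemma ut_minus:
  assumes A: "A \<in> carrier (UT n)" and B: "B \<in> carrier (UT n)"
  shows "(A \<ominus>\<^bsub>UT n\<^esub> B) i j = A i j \<ominus> B i j"
  using ut_a_inv[OF B] by (simp add: a_minus_def ut_add)

lemma ut_nilp:
  assumes N: "N \<in> carrier (UT n)" and dg: "\<And>i. i < n \<Longrightarrow> (N i i) [^] (p::nat) = \<zero>"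
  shows "N [^]\<^bsub>UT n\<^esub> (p * n) = \<zero>\<^bsub>UT n\<^esub>"
proof -
  have pc: "N [^]\<^bsub>UT n\<^esub> (k::nat) \<in> carrier (UT n)" for k using monoid.nat_pow_closed[OF ut_monoid N] .
  have claim: "\<forall>i j k. j = i + d \<longrightarrow> j < n \<longrightarrow> p * (d + 1) \<le> k \<longrightarrow> (N [^]\<^bsub>UT n\<^esub> k) i j = \<zero>" for d
  proof (induction d rule: less_induct)
    case (less d)
    show ?case
    proof (intro allI impI)
      fix i j k assume j: "j = i + d" and jn: "j < n" and k: "p * (d + 1) \<le> k"
      have split: "N [^]\<^bsub>UT n\<^esub> k = N [^]\<^bsub>UT n\<^esub> p \<otimes>\<^bsub>UT n\<^esub> N [^]\<^bsub>UT n\<^esub> (k - p)"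
        using monoid.nat_pow_mult[OF ut_monoid N, of p "k - p"] k by simp
      have z: "(N [^]\<^bsub>UT n\<^esub> p) i l \<otimes> (N [^]\<^bsub>UT n\<^esub> (k - p)) l j = \<zero>" for l
      proof -
        consider "l < i" | "l = i" | "j < l" | "i < l" "l \<le> j" by linarith
        then show ?thesis
        proof cases
          case 1 then show ?thesis using ut_out[OF pc, of i l] ut_in[OF pc] by simp
        next
          case 2 then show ?thesis using ut_diag_pow[OF N, of i p] dg[of i] j jn ut_in[OF pc] by simp
        next
          case 3 then show ?thesis using ut_out[OF pc, of l j] ut_in[OF pc] by simp
        next
          case 4
          define d' where "d' = j - l"
          have dd: "d' < d" "j = l + d'" using 4 j by (auto simp: d'_def)
          have "p * (d' + 1) \<le> p * d" using dd by (intro mult_le_mono2) simp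
          also have "p * d = p * (d + 1) - p" by simp
          finally have "p * (d' + 1) \<le> k - p" using k by linarith
          then have "(N [^]\<^bsub>UT n\<^esub> (k - p)) l j = \<zero>" using less dd jn by blast
          then show ?thesis using ut_in[OF pc] by simp
        qed
      qed
      have "(N [^]\<^bsub>UT n\<^esub> k) i j = (\<Oplus>l\<in>{..<n}. (N [^]\<^bsub>UT n\<^esub> p) i l \<otimes> (N [^]\<^bsub>UT n\<^esub> (k - p)) l j)"
        unfolding split using j jn by (simp add: ut_mult)
      also have "\<dots> = \<zero>" by (simp add: z)
      finally show "(N [^]\<^bsub>UT n\<^esub> k) i j = \<zero>" .
    qed
  qed
  show ?thesis
  proof (rule ut_eqI[OF pc ut_zero_closed])
    fix i j assume i: "i < n" and j: "j < n"
    show "(N [^]\<^bsub>UT n\<^esub> (p * n)) i j = \<zero>\<^bsub>UT n\<^esub> i j"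
    proof (cases "i \<le> j")
      case True
      have "p * (j - i + 1) \<le> p * n" using j by (intro mult_le_mono2) simp
      moreover have "j = i + (j - i)" using True by simp
      ultimately have "(N [^]\<^bsub>UT n\<^esub> (p * n)) i j = \<zero>"
        using claim[of "j - i", rule_format, of j i "p * n"] j by simp
      then show ?thesis by (simp add: ut_zero)
    next
      case False then show ?thesis using ut_out[OF pc] by (simp add: ut_zero)
    qed
  qed
qed

lemma snc_ut:
  assumes snc: "strongly_nil_clean R"
  shows "strongly_weakly_nil_clean (UT n)"
  unfolding strongly_weakly_nil_clean_def
proof
  fix A assume A: "A \<in> carrier (UT n)"
  have "\<forall>i. \<exists>m::nat. i < n \<longrightarrow> (A i i \<ominus> A i i \<otimes> A i i) [^] m = \<zero>"
    using snc snc_imp ut_in[OF A] unfolding strongly_nil_clean_def by blast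
  then obtain M where M: "\<And>i. i < n \<Longrightarrow> (A i i \<ominus> A i i \<otimes> A i i) [^] (M i :: nat) = \<zero>"
    by metis
  define p where "p = (\<Sum>i<n. M i)"
  have Mp: "i < n \<Longrightarrow> (A i i \<ominus> A i i \<otimes> A i i) [^] p = \<zero>" for i
    using pow_zero_mono[OF _ M[of i]] ut_in[OF A] member_le_sum[of i "{..<n}" M]
    by (simp add: p_def)
  define N where "N = A \<ominus>\<^bsub>UT n\<^esub> A \<otimes>\<^bsub>UT n\<^esub> A"
  have AA: "A \<otimes>\<^bsub>UT n\<^esub> A \<in> carrier (UT n)" using ut_mult_closed[OF A A] .
  have Nc: "N \<in> carrier (UT n)" unfolding N_def using abelian_group.minus_closed[OF ut_abelian_group A AA] .
  have "N i i = A i i \<ominus> A i i \<otimes> A i i" if "i < n" for i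
    unfolding N_def using ut_minus[OF A AA] ut_diag_mult[OF A A that] by simp
  then have "N [^]\<^bsub>UT n\<^esub> (p * n) = \<zero>\<^bsub>UT n\<^esub>" using ut_nilp[OF Nc, of p] Mp by simp
  then have "strongly_nil_clean_elem (UT n) A"
    using ring.diesl[OF ut_ring A] unfolding N_def by blast
  then obtain e q where "idem (UT n) e" "nilp (UT n) q" "e \<otimes>\<^bsub>UT n\<^esub> q = q \<otimes>\<^bsub>UT n\<^esub> e" "A = e \<oplus>\<^bsub>UT n\<^esub> q"
    unfolding strongly_nil_clean_elem_def by blast
  moreover have "e \<oplus>\<^bsub>UT n\<^esub> q = q \<oplus>\<^bsub>UT n\<^esub> e"
    using calculation abelian_monoid.a_comm[OF abelian_group.axioms(1)[OF ut_abelian_group]] by (auto simp: idem_def nilp_def)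
  ultimately show "strongly_weakly_nil_clean_elem (UT n) A"
    unfolding strongly_weakly_nil_clean_elem_def by metis
qed

lemma gswnc_snc:
  assumes n: "3 \<le> n" and g: "GSWNC (UT n)"
  shows "strongly_nil_clean R"
  unfolding strongly_nil_clean_def
proof
  fix a assume a: "a \<in> carrier R"
  show "strongly_nil_clean_elem R a"
  proof (cases "\<one> = \<zero>")
    case True
    then have "a = \<zero>" using one_zeroD a by auto
    moreover have "idem R \<zero>" by (simp add: idem_def)
    moreover have "nilp R \<zero>" unfolding nilp_def by (intro conjI exI[of _ "1::nat"]) auto
    ultimately show ?thesis unfolding strongly_nil_clean_elem_def by force
  next
    case False
    define A where "A = (\<lambda>(i::nat) (j::nat). if i = 0 \<and> j = 0 then a else if i = 1 \<and> j = 1 then \<one> else \<zero>)"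
    have Ac: "A \<in> carrier (UT n)" using n a by (simp add: ut_carrier A_def)
    have "A \<notin> Units (UT n)"
    proof
      assume "A \<in> Units (UT n)"
      then obtain B where B: "B \<in> carrier (UT n)" and BA: "B \<otimes>\<^bsub>UT n\<^esub> A = \<one>\<^bsub>UT n\<^esub>"
        unfolding Units_def by blast
      have "(B \<otimes>\<^bsub>UT n\<^esub> A) 2 2 = (\<Oplus>k\<in>{..<n}. B 2 k \<otimes> A k 2)" using n by (simp add: ut_mult)
      also have "\<dots> = \<zero>" using ut_in[OF B] by (simp add: A_def)
      finally show False using BA n False by (simp add: ut_one)
    qed
    then obtain E Q where E: "idem (UT n) E" and Q: "nilp (UT n) Q" and EQ: "E \<otimes>\<^bsub>UT n\<^esub> Q = Q \<otimes>\<^bsub>UT n\<^esub> E"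
      and dis: "A = Q \<oplus>\<^bsub>UT n\<^esub> E \<or> A = Q \<ominus>\<^bsub>UT n\<^esub> E"
      using g Ac unfolding GSWNC_def strongly_weakly_nil_clean_elem_def by blast
    have Ec: "E \<in> carrier (UT n)" and EE: "E \<otimes>\<^bsub>UT n\<^esub> E = E" using E by (auto simp: idem_def)
    obtain k where Qc: "Q \<in> carrier (UT n)" and Qk: "Q [^]\<^bsub>UT n\<^esub> (k::nat) = \<zero>\<^bsub>UT n\<^esub>"
      using Q by (auto simp: nilp_def)
    have ei: "E i i \<in> carrier R" "E i i \<otimes> E i i = E i i" if "i < n" for i
      using ut_in[OF Ec] ut_diag_mult[OF Ec Ec that] EE by auto
    have qi: "Q i i \<in> carrier R" "(Q i i) [^] k = \<zero>" if "i < n" for i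
      using ut_in[OF Qc] ut_diag_pow[OF Qc that, of k] Qk by (auto simp: ut_zero)
    have eqi: "E i i \<otimes> Q i i = Q i i \<otimes> E i i" if "i < n" for i
      using ut_diag_mult[OF Ec Qc that] ut_diag_mult[OF Qc Ec that] EQ by metis
    have n0: "0 < n" and n1: "1 < n" using n by auto
    from dis show ?thesis
    proof
      assume p: "A = Q \<oplus>\<^bsub>UT n\<^esub> E"
      have "a = Q 0 0 \<oplus> E 0 0" using fun_cong[OF fun_cong[OF p, of 0], of 0] by (simp add: A_def ut_add)
      then have "a = E 0 0 \<oplus> Q 0 0" using ei(1)[OF n0] qi(1)[OF n0] a_comm by simp
      moreover have "idem R (E 0 0)" using ei[OF n0] by (simp add: idem_def)
      moreover have "nilp R (Q 0 0)" using qi[OF n0] by (auto simp: nilp_def)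
      ultimately show ?thesis using eqi[OF n0] unfolding strongly_nil_clean_elem_def by blast
    next
      assume m: "A = Q \<ominus>\<^bsub>UT n\<^esub> E"
      have a0: "a = Q 0 0 \<ominus> E 0 0"
        using fun_cong[OF fun_cong[OF m, of 0], of 0] ut_minus[OF Qc Ec] by (simp add: A_def)
      have a1: "\<one> = Q 1 1 \<ominus> E 1 1"
        using fun_cong[OF fun_cong[OF m, of 1], of 1] ut_minus[OF Qc Ec] by (simp add: A_def)
      have "(\<one> \<oplus> \<one>) [^] k = \<zero>" using two_nilp[OF ei[OF n1] qi[OF n1] a1] .
      then show ?thesis using minus_case[OF ei[OF n0] qi[OF n0] eqi[OF n0]] a0 by simp
    qed
  qed
qed

end

theorem proposition2p9:
  fixes R :: "('a, 'm) ring_scheme"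
  assumes "ring R"
  shows "(strongly_nil_clean R \<longleftrightarrow>
            (\<forall>n\<ge>1. strongly_weakly_nil_clean (upper_tri n R)))
       \<and> ((\<forall>n\<ge>1. strongly_weakly_nil_clean (upper_tri n R)) \<longleftrightarrow>
            (\<exists>n\<ge>3. strongly_weakly_nil_clean (upper_tri n R)))
       \<and> ((\<exists>n\<ge>3. strongly_weakly_nil_clean (upper_tri n R)) \<longleftrightarrow>
            (\<exists>n\<ge>3. GSWNC (upper_tri n R)))"
proof -
  interpret ring R by fact
  have 12: "strongly_nil_clean R \<Longrightarrow> (\<forall>n\<ge>1. strongly_weakly_nil_clean (upper_tri n R))"
    using snc_ut by blast
  have 23: "(\<forall>n\<ge>1. strongly_weakly_nil_clean (upper_tri n R)) \<Longrightarrow> (\<exists>n\<ge>3. strongly_weakly_nil_clean (upper_tri n R))"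
  proof -
    assume H: "\<forall>n\<ge>1. strongly_weakly_nil_clean (upper_tri n R)"
    then have "strongly_weakly_nil_clean (upper_tri 3 R)" by simp
    then show ?thesis by (intro exI[of _ 3]) auto
  qed
  have 34: "(\<exists>n\<ge>3. strongly_weakly_nil_clean (upper_tri n R)) \<Longrightarrow> (\<exists>n\<ge>3. GSWNC (upper_tri n R))"
    unfolding strongly_weakly_nil_clean_def GSWNC_def by blast
  have 41: "(\<exists>n\<ge>3. GSWNC (upper_tri n R)) \<Longrightarrow> strongly_nil_clean R"
    using gswnc_snc by blast
  show ?thesis using 12 23 34 41 by blast
qed

end
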